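(* Let $V$ be a finite-dimensional real vector space and $X\subseteq V$ a finite or countable set in which every $2$-dimensional linear subset has fundamental vectors, equipped with a suitable ordering. Then the subsets of $X$ that are biclosed in $X$ form a complete lattice under containment. More specifically, for any collection $\mathcal{X}$ of biclosed subsets of $X$, \[\bigvee_{Y\in\mathcal{X}}Y=\overline{\bigcup_{Y\in\mathcal{X}}Y},\qquad \bigwedge_{Y\in\mathcal{X}}Y=\Big(\bigcap_{Y\in\mathcal{X}}Y\Big)^{\circ}.\]
   Context: $\mathrm{Span}_+$ denotes nonnegative linear combinations. For $Y\subseteq X$, $B\subseteq Y$: closed in $Y$ if $\alpha,\beta\in B$, $\gamma\in\mathrm{Span}_+(\alpha,\beta)\cap Y$ imply $\gamma\in B$; coclosed if $Y\setminus B$ closed; biclosed if both; weakly separable if $\mathrm{Span}_+(B)\cap\mathrm{Span}_+(Y\setminus B)=\{0\}$; $Y$ is clean if every biclosed subset of $Y$ is weakly separable in $Y$. $\overline{A}$ denotes the closure of $A$ in $X$ (smallest closed subset of $X$ containing $A$) and $A^\circ=X\setminus\overline{X\setminus A}$ the interior (largest coclosed subset of $X$ contained in $A$). A linear subset is $X\cap L$ for a subspace $L$. A $2$-dimensional linear subset $Y$ has fundamental vectors $\alpha,\beta\in Y$ if $Y\subseteq\mathrm{Span}_+\{\alpha,\beta\}$ and neither $\alpha$ nor $\beta$ lies in the nonnegative span of the other elements of $Y$. $F\subseteq X$ is full if $F\cap\mathrm{Span}\{\alpha,\beta\}=X\cap\mathrm{Span}\{\alpha,\beta\}$ for all $\alpha,\beta\in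 F$. An ordering $\gamma_1,\gamma_2,\ldots$ of $X$ with initial segments $X_i=\{\gamma_1,\dots,\gamma_i\}$ is suitable if (1) in every $2$-dimensional linear subset the fundamental vectors precede all its other vectors, and (2) for every $i$ and $\alpha,\beta,\gamma\in X_i$ there is a full $F\subseteq X$ containing them with $F\cap X_i$ clean. *)

theory Defs
  imports "HOL-Analysis.Analysis"
begin

text \<open>Nonnegative linear combinations (finite sums with nonnegative coefficients).
  The empty sum gives 0, so pos_span {} = {0}.\<close>
definition pos_span :: "'v::real_vector set \<Rightarrow> 'v set" where
  "pos_span S = {(\<Sum>v\<in>F. c v *\<^sub>R v) | F c. finite F \<and> F \<subseteq> S \<and> (\<forall>v\<in>F. 0 \<le> c v)}"

definition closed_in_set :: "'v::real_vector set \<Rightarrow> 'v set \<Rightarrow> bool" where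
  "closed_in_set Y B \<longleftrightarrow> B \<subseteq> Y \<and>
     (\<forall>\<alpha>\<in>B. \<forall>\<beta>\<in>B. \<forall>\<gamma>\<in>Y. \<gamma> \<in> pos_span {\<alpha>, \<beta>} \<longrightarrow> \<gamma> \<in> B)"

definition coclosed_in_set :: "'v::real_vector set \<Rightarrow> 'v set \<Rightarrow> bool" where
  "coclosed_in_set Y B \<longleftrightarrow> B \<subseteq> Y \<and> closed_in_set Y (Y - B)"

definition biclosed_in_set :: "'v::real_vector set \<Rightarrow> 'v set \<Rightarrow> bool" where
  "biclosed_in_set Y B \<longleftrightarrow> closed_in_set Y B \<and> coclosed_in_set Y B"

definition weakly_separable :: "'v::real_vector set \<Rightarrow> 'v set \<Rightarrow> bool" where
  "weakly_separable Y B \<longleftrightarrow> pos_span B \<inter> pos_span (Y - B) = {0}"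

definition clean :: "'v::real_vector set \<Rightarrow> bool" where
  "clean Y \<longleftrightarrow> (\<forall>B. biclosed_in_set Y B \<longrightarrow> weakly_separable Y B)"

definition bclosure :: "'v::real_vector set \<Rightarrow> 'v set \<Rightarrow> 'v set" where
  "bclosure X A = \<Inter>{C. closed_in_set X C \<and> A \<subseteq> C}"

definition binterior :: "'v::real_vector set \<Rightarrow> 'v set \<Rightarrow> 'v set" where
  "binterior X A = X - bclosure X (X - A)"

definition two_dim_linear_subset :: "'v::euclidean_space set \<Rightarrow> 'v set \<Rightarrow> bool" where
  "two_dim_linear_subset X Y \<longleftrightarrow> (\<exists>L. subspace L \<and> Y = X \<inter> L) \<and> dim Y = 2"

definition fundamental_vectors :: "'v::real_vector set \<Rightarrow> 'v \<Rightarrow> 'v \<Rightarrow> bool" where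
  "fundamental_vectors Y \<alpha> \<beta> \<longleftrightarrow> \<alpha> \<in> Y \<and> \<beta> \<in> Y \<and> Y \<subseteq> pos_span {\<alpha>, \<beta>} \<and>
     \<alpha> \<notin> pos_span (Y - {\<alpha>}) \<and> \<beta> \<notin> pos_span (Y - {\<beta>})"

definition full_subset :: "'v::real_vector set \<Rightarrow> 'v set \<Rightarrow> bool" where
  "full_subset X F \<longleftrightarrow> F \<subseteq> X \<and>
     (\<forall>\<alpha>\<in>F. \<forall>\<beta>\<in>F. F \<inter> span {\<alpha>, \<beta>} = X \<inter> span {\<alpha>, \<beta>})"

text \<open>An ordering of X is encoded by an injective rank function r : X \<rightarrow> nat
  (gamma_1, gamma_2, ... listed by increasing rank); the initial segments
  are {x \<in> X. r x < i}.\<close>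
definition initial_segment :: "'v set \<Rightarrow> ('v \<Rightarrow> nat) \<Rightarrow> nat \<Rightarrow> 'v set" where
  "initial_segment X r i = {x \<in> X. r x < i}"

definition suitable_ordering :: "'v::euclidean_space set \<Rightarrow> ('v \<Rightarrow> nat) \<Rightarrow> bool" where
  "suitable_ordering X r \<longleftrightarrow> inj_on r X \<and>
     (\<forall>Y \<alpha> \<beta> \<gamma>. two_dim_linear_subset X Y \<and> fundamental_vectors Y \<alpha> \<beta> \<and>
         \<gamma> \<in> Y - {\<alpha>, \<beta>} \<longrightarrow> r \<alpha> < r \<gamma> \<and> r \<beta> < r \<gamma>) \<and>
     (\<forall>i. \<forall>\<alpha>\<in>initial_segment X r i. \<forall>\<beta>\<in>initial_segment X r i. \<forall>\<gamma>\<in>initial_segment X r i.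
         \<exists>F. full_subset X F \<and> \<alpha> \<in> F \<and> \<beta> \<in> F \<and> \<gamma> \<in> F \<and>
             clean (F \<inter> initial_segment X r i))"

end

theory Submission
  imports Defs
begin


lemma pos_span_0: "0 \<in> pos_span A"
  unfolding pos_span_def by (rule CollectI, rule exI[of _ "{}"], auto)

lemma pos_span_base: "a \<in> A \<Longrightarrow> a \<in> pos_span A"
  unfolding pos_span_def
  by (rule CollectI, rule exI[of _ "{a}"], rule exI[of _ "\<lambda>_. 1"], auto)

lemma pos_span_mono: "A \<subseteq> B \<Longrightarrow> pos_span A \<subseteq> pos_span B"
  unfolding pos_span_def by blast

lemma pos_span_scale:
  assumes "y \<in> pos_span A" "(k::real) \<ge> 0" shows "k *\<^sub>R y \<in> pos_span A"
proof -
  obtain F c where F: "y = (\<Sum>v\<in>F. c v *\<^sub>R v)" "finite F" "F \<subseteq> A" "\<forall>v\<in>F. 0 \<le> c v"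
    using assms(1) unfolding pos_span_def by blast
  have "k *\<^sub>R y = (\<Sum>v\<in>F. (k * c v) *\<^sub>R v)"
    by (simp add: F(1) scaleR_sum_right)
  then show ?thesis unfolding pos_span_def using F assms(2)
    by (intro CollectI exI[of _ F] exI[of _ "\<lambda>v. k * c v"]) auto
qed

lemma sum_restrict_aux:
  assumes "finite G" "F \<subseteq> G"
  shows "(\<Sum>v\<in>G. (if v \<in> F then c v else 0) *\<^sub>R (v::'v::real_vector)) = (\<Sum>v\<in>F. c v *\<^sub>R v)"
proof -
  have "(\<Sum>v\<in>G. (if v \<in> F then c v else 0) *\<^sub>R v) = (\<Sum>v\<in>G. if v \<in> F then c v *\<^sub>R v else 0)"
    by (rule sum.cong) auto
  also have "\<dots> = (\<Sum>v\<in>{v\<in>G. v \<in> F}. c v *\<^sub>R v)"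
    using assms(1) by (rule sum.inter_filter[symmetric])
  also have "{v\<in>G. v \<in> F} = F" using assms(2) by auto
  finally show ?thesis .
qed

lemma pos_span_add:
  assumes "y \<in> pos_span A" "z \<in> pos_span A" shows "y + z \<in> pos_span A"
proof -
  obtain F c where F: "y = (\<Sum>v\<in>F. c v *\<^sub>R v)" "finite F" "F \<subseteq> A" "\<forall>v\<in>F. 0 \<le> c v"
    using assms(1) unfolding pos_span_def by blast
  obtain G d where G: "z = (\<Sum>v\<in>G. d v *\<^sub>R v)" "finite G" "G \<subseteq> A" "\<forall>v\<in>G. 0 \<le> d v"
    using assms(2) unfolding pos_span_def by blast
  define e where "e v = (if v \<in> F then c v else 0) + (if v \<in> G then d v else 0)" for v
  have "(\<Sum>v\<in>F\<union>G. e v *\<^sub>R v) = (\<Sum>v\<in>F\<union>G. (if v \<in> F then c v else 0) *\<^sub>R v)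
      + (\<Sum>v\<in>F\<union>G. (if v \<in> G then d v else 0) *\<^sub>R v)"
    unfolding e_def by (simp add: scaleR_add_left sum.distrib)
  also have "\<dots> = y + z"
    using F G by (simp add: sum_restrict_aux)
  finally have "y + z = (\<Sum>v\<in>F\<union>G. e v *\<^sub>R v)" by simp
  then show ?thesis unfolding pos_span_def using F G
    by (intro CollectI exI[of _ "F \<union> G"] exI[of _ e]) (auto simp: e_def)
qed

lemma pos_span_sum:
  assumes "finite F" "\<forall>v\<in>F. f v \<in> pos_span A" shows "sum f F \<in> pos_span A"
  using assms by (induction F rule: finite_induct) (auto simp: pos_span_0 pos_span_add)

lemma pos_span_trans:
  assumes "B \<subseteq> pos_span A" shows "pos_span B \<subseteq> pos_span A"
proof
  fix y assume "y \<in> pos_span B"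
  then obtain F c where F: "y = (\<Sum>v\<in>F. c v *\<^sub>R v)" "finite F" "F \<subseteq> B" "\<forall>v\<in>F. 0 \<le> c v"
    unfolding pos_span_def by blast
  show "y \<in> pos_span A" unfolding F(1)
    using F assms by (intro pos_span_sum) (auto intro!: pos_span_scale)
qed

lemma pos_span_span: "pos_span A \<subseteq> span A"
  unfolding pos_span_def by (auto intro!: span_sum span_scale intro: span_base)

lemma pos_span_pair:
  "y \<in> pos_span {a, b} \<longleftrightarrow> (\<exists>c1 c2. c1 \<ge> 0 \<and> c2 \<ge> 0 \<and> y = c1 *\<^sub>R a + c2 *\<^sub>R b)"
proof
  assume "y \<in> pos_span {a, b}"
  then obtain F c where F: "y = (\<Sum>v\<in>F. c v *\<^sub>R v)" "finite F" "F \<subseteq> {a,b}" "\<forall>v\<in>F. 0 \<le> c v"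
    unfolding pos_span_def by blast
  define c' where "c' v = (if v \<in> F then c v else 0)" for v
  have y: "y = (\<Sum>v\<in>{a,b}. c' v *\<^sub>R v)" unfolding c'_def F(1)
    using F(3) by (simp add: sum_restrict_aux)
  have nn: "c' v \<ge> 0" for v using F(4) by (auto simp: c'_def)
  show "\<exists>c1 c2. c1 \<ge> 0 \<and> c2 \<ge> 0 \<and> y = c1 *\<^sub>R a + c2 *\<^sub>R b"
  proof (cases "a = b")
    case True
    then show ?thesis using y nn by (intro exI[of _ "c' a"] exI[of _ 0]) auto
  next
    case False
    then show ?thesis using y nn by (intro exI[of _ "c' a"] exI[of _ "c' b"]) auto
  qed
next
  assume "\<exists>c1 c2. c1 \<ge> 0 \<and> c2 \<ge> 0 \<and> y = c1 *\<^sub>R a + c2 *\<^sub>R b"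
  then obtain c1 c2 where c: "c1 \<ge> 0" "c2 \<ge> 0" "y = c1 *\<^sub>R a + c2 *\<^sub>R b" by blast
  show "y \<in> pos_span {a, b}"
  proof (cases "a = b")
    case True
    then have "y = (\<Sum>v\<in>{a}. (c1 + c2) *\<^sub>R v)" using c by (simp add: scaleR_add_left)
    then show ?thesis unfolding pos_span_def using True c
      by (intro CollectI exI[of _ "{a}"] exI[of _ "\<lambda>_. c1 + c2"]) auto
  next
    case False
    then have "y = (\<Sum>v\<in>{a,b}. (if v = a then c1 else c2) *\<^sub>R v)" using c by simp
    then show ?thesis unfolding pos_span_def using False c
      by (intro CollectI exI[of _ "{a,b}"] exI[of _ "\<lambda>v. if v = a then c1 else c2"]) auto
  qed
qed

lemma pos_span_sing: "y \<in> pos_span {a} \<longleftrightarrow> (\<exists>c\<ge>0. y = c *\<^sub>R a)"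
proof -
  have "y \<in> pos_span {a} \<longleftrightarrow> y \<in> pos_span {a, a}" by simp
  also have "\<dots> \<longleftrightarrow> (\<exists>c\<ge>0. y = c *\<^sub>R a)"
    unfolding pos_span_pair
    by (metis add.right_neutral add_nonneg_nonneg order_refl scaleR_add_left scaleR_zero_left)
  finally show ?thesis .
qed



lemma closed_in_setD:
  "closed_in_set Y B \<Longrightarrow> \<alpha> \<in> B \<Longrightarrow> \<beta> \<in> B \<Longrightarrow> \<gamma> \<in> Y \<Longrightarrow> \<gamma> \<in> pos_span {\<alpha>, \<beta>} \<Longrightarrow> \<gamma> \<in> B"
  unfolding closed_in_set_def by blast

lemma closed_in_setI:
  "B \<subseteq> Y \<Longrightarrow> (\<And>\<alpha> \<beta> \<gamma>. \<alpha> \<in> B \<Longrightarrow> \<beta> \<in> B \<Longrightarrow> \<gamma> \<in> Y \<Longrightarrow> \<gamma> \<in> pos_span {\<alpha>, \<beta>} \<Longrightarrow> \<gamma> \<in> B)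
   \<Longrightarrow> closed_in_set Y B"
  unfolding closed_in_set_def by blast

lemma closed_sub: "closed_in_set Y B \<Longrightarrow> B \<subseteq> Y"
  unfolding closed_in_set_def by blast

lemma closed_restrict:
  assumes "closed_in_set S B" "T \<subseteq> S" shows "closed_in_set T (B \<inter> T)"
proof (rule closed_in_setI)
  show "B \<inter> T \<subseteq> T" by blast
next
  fix \<alpha> \<beta> \<gamma> assume "\<alpha> \<in> B \<inter> T" "\<beta> \<in> B \<inter> T" "\<gamma> \<in> T" "\<gamma> \<in> pos_span {\<alpha>, \<beta>}"
  then show "\<gamma> \<in> B \<inter> T" using closed_in_setD[OF assms(1), of \<alpha> \<beta> \<gamma>] assms(2) by blast
qed

lemma biclosed_restrict:
  assumes "biclosed_in_set S B" "T \<subseteq> S" shows "biclosed_in_set T (B \<inter> T)"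
proof -
  have c1: "closed_in_set S B" and c2: "closed_in_set S (S - B)"
    using assms(1) unfolding biclosed_in_set_def coclosed_in_set_def by auto
  have "closed_in_set T ((S - B) \<inter> T)" using closed_restrict[OF c2 assms(2)] .
  moreover have "(S - B) \<inter> T = T - B \<inter> T" using assms(2) by blast
  ultimately have "closed_in_set T (T - B \<inter> T)" by simp
  then show ?thesis using closed_restrict[OF c1 assms(2)]
    unfolding biclosed_in_set_def coclosed_in_set_def by auto
qed

lemma bclosure_closed:
  assumes "A \<subseteq> S" shows "closed_in_set S (bclosure S A)"
proof (rule closed_in_setI)
  have "closed_in_set S S" by (rule closed_in_setI) auto
  then show "bclosure S A \<subseteq> S" unfolding bclosure_def using assms by (intro Inter_lower) simp
next
  fix \<alpha> \<beta> \<gamma> assume a: "\<alpha> \<in> bclosure S A" "\<beta> \<in> bclosure S A" "\<gamma> \<in> S" "\<gamma> \<in> pos_span {\<alpha>, \<beta>}"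
  show "\<gamma> \<in> bclosure S A" unfolding bclosure_def
  proof (rule InterI)
    fix C assume "C \<in> {C. closed_in_set S C \<and> A \<subseteq> C}"
    then have C: "closed_in_set S C" "A \<subseteq> C" by auto
    have "\<alpha> \<in> C" "\<beta> \<in> C" using a(1,2) C unfolding bclosure_def by auto
    then show "\<gamma> \<in> C" using closed_in_setD[OF C(1) _ _ a(3,4)] by blast
  qed
qed

lemma bclosure_sub: "A \<subseteq> bclosure S A"
  unfolding bclosure_def by (rule Inter_greatest) auto

lemma bclosure_min: "closed_in_set S C \<Longrightarrow> A \<subseteq> C \<Longrightarrow> bclosure S A \<subseteq> C"
  unfolding bclosure_def by (rule Inter_lower) auto

lemma bclosure_eq:
  assumes "closed_in_set S M" "A \<subseteq> M" "\<And>C. closed_in_set S C \<Longrightarrow> A \<subseteq> C \<Longrightarrow> M \<subseteq> C"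
  shows "bclosure S A = M"
proof
  show "bclosure S A \<subseteq> M" using bclosure_min[OF assms(1,2)] .
  show "M \<subseteq> bclosure S A" unfolding bclosure_def using assms(3) by (intro Inter_greatest) auto
qed

lemma zero_biclosed:
  assumes z: "(0::'v::real_vector) \<in> X" and bc: "biclosed_in_set X B" and b: "b \<in> B" shows "B = X"
proof -
  have cl: "closed_in_set X B" and co: "closed_in_set X (X - B)"
    using bc unfolding biclosed_in_set_def coclosed_in_set_def by auto
  have sub: "B \<subseteq> X" using closed_sub[OF cl] .
  have p0: "(0::'v) \<in> pos_span {b, b}" by (rule pos_span_0)
  have zB: "0 \<in> B" by (rule closed_in_setD[OF cl b b z p0])
  have "y \<in> B" if y: "y \<in> X" for y
  proof (rule ccontr)
    assume "y \<notin> B"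
    then have yc: "y \<in> X - B" using y by blast
    have "(0::'v) \<in> pos_span {y, y}" by (rule pos_span_0)
    then have "0 \<in> X - B" by (rule closed_in_setD[OF co yc yc z])
    with zB show False by blast
  qed
  then show ?thesis using sub by blast
qed

lemma wl_alg:
  fixes h1 h2 :: "'v::real_vector"
  assumes "d1 \<ge> 0" "d2 \<ge> 0" "a1 \<ge> 0" "a2 \<ge> 0" "s > 0" "t > 0"
    and dl: "dl = d1 *\<^sub>R h1 + d2 *\<^sub>R h2" and a: "a = a1 *\<^sub>R h1 + a2 *\<^sub>R h2"
    and x: "x = s *\<^sub>R dl + t *\<^sub>R a" and ineq: "d1 * a2 \<ge> d2 * a1"
    and ns: "dl \<notin> span {a}" and an: "a \<noteq> 0"
  shows "dl \<in> pos_span {h1, x} \<and> x \<in> pos_span {h1, a}"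
proof -
  define x1 where "x1 = s * d1 + t * a1"
  define x2 where "x2 = s * d2 + t * a2"
  have xx: "x = x1 *\<^sub>R h1 + x2 *\<^sub>R h2"
    unfolding x dl a x1_def x2_def by (simp add: algebra_simps)
  have a2: "a2 > 0"
  proof (rule ccontr)
    assume "\<not> a2 > 0"
    then have a20: "a2 = 0" using assms(4) by simp
    then have "d2 * a1 \<le> 0" using ineq by simp
    moreover have "d2 * a1 \<ge> 0" using assms(2,3) by simp
    ultimately have "d2 * a1 = 0" by linarith
    then have "d2 = 0 \<or> a1 = 0" by simp
    moreover have "a1 \<noteq> 0" using an a a20 by auto
    ultimately have d20: "d2 = 0" by blast
    have "dl = (d1 / a1) *\<^sub>R a" using a a20 d20 dl \<open>a1 \<noteq> 0\<close> by simp
    then have "dl \<in> span {a}" by (simp add: span_scale span_base)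
    with ns show False by blast
  qed
  have x2: "x2 > 0" unfolding x2_def using assms(2,5,6) a2
    by (simp add: add_nonneg_pos)
  have c1: "d1 * x2 - d2 * x1 = t * (d1 * a2 - d2 * a1)" unfolding x1_def x2_def by (simp add: algebra_simps)
  have c2: "x1 * a2 - x2 * a1 = s * (d1 * a2 - d2 * a1)" unfolding x1_def x2_def by (simp add: algebra_simps)
  have e1: "(d1 * x2 - d2 * x1) / x2 + (d2 / x2) * x1 = d1" using x2 by (simp add: divide_simps)
  have e2: "(d2 / x2) * x2 = d2" using x2 by simp
  have "((d1 * x2 - d2 * x1) / x2) *\<^sub>R h1 + (d2 / x2) *\<^sub>R x
      = ((d1 * x2 - d2 * x1) / x2 + (d2 / x2) * x1) *\<^sub>R h1 + ((d2 / x2) * x2) *\<^sub>R h2"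
    unfolding xx by (simp add: algebra_simps)
  then have "dl = ((d1 * x2 - d2 * x1) / x2) *\<^sub>R h1 + (d2 / x2) *\<^sub>R x"
    unfolding e1 e2 dl by simp
  moreover have "(d1 * x2 - d2 * x1) / x2 \<ge> 0" using c1 ineq assms(6) x2 by simp
  moreover have "d2 / x2 \<ge> 0" using assms(2) x2 by simp
  ultimately have 1: "dl \<in> pos_span {h1, x}" unfolding pos_span_pair by blast
  have e3: "(x1 * a2 - x2 * a1) / a2 + (x2 / a2) * a1 = x1" using a2 by (simp add: divide_simps)
  have e4: "(x2 / a2) * a2 = x2" using a2 by simp
  have "((x1 * a2 - x2 * a1) / a2) *\<^sub>R h1 + (x2 / a2) *\<^sub>R a
      = ((x1 * a2 - x2 * a1) / a2 + (x2 / a2) * a1) *\<^sub>R h1 + ((x2 / a2) * a2) *\<^sub>R h2"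
    unfolding a by (simp add: algebra_simps)
  then have "x = ((x1 * a2 - x2 * a1) / a2) *\<^sub>R h1 + (x2 / a2) *\<^sub>R a"
    unfolding e3 e4 xx by simp
  moreover have "(x1 * a2 - x2 * a1) / a2 \<ge> 0" using c2 ineq assms(5) a2 by simp
  moreover have "x2 / a2 \<ge> 0" using x2 a2 by simp
  ultimately have 2: "x \<in> pos_span {h1, a}" unfolding pos_span_pair by blast
  show ?thesis using 1 2 by blast
qed



locale bctx =
  fixes X :: "'v::euclidean_space set" and r :: "'v \<Rightarrow> nat" and XX :: "'v set set"
  assumes fund: "\<And>Y. two_dim_linear_subset X Y \<Longrightarrow> \<exists>\<alpha> \<beta>. fundamental_vectors Y \<alpha> \<beta>"
    and suit: "suitable_ordering X r"
    and bic: "\<forall>Y\<in>XX. biclosed_in_set X Y"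
begin

lemma ord1: "two_dim_linear_subset X Y \<Longrightarrow> fundamental_vectors Y \<alpha> \<beta> \<Longrightarrow> \<gamma> \<in> Y - {\<alpha>, \<beta>}
   \<Longrightarrow> r \<alpha> < r \<gamma> \<and> r \<beta> < r \<gamma>"
  using suit unfolding suitable_ordering_def by blast

lemma wlemma:
  assumes dX: "dl \<in> X" and aX: "a \<in> X" and xX: "x \<in> X" and rx: "r x < r dl"
    and xs: "x \<in> pos_span {dl, a}" and xa: "x \<notin> pos_span {a}" and xd: "x \<noteq> dl"
  shows "\<exists>w\<in>X. r w < r dl \<and> dl \<in> pos_span {w, x} \<and> x \<in> pos_span {w, a}"
proof (cases "dl \<in> pos_span {x}")
  case True
  have "dl \<in> pos_span {x, x}" using True by simp
  moreover have "x \<in> pos_span {x, a}" by (rule pos_span_base) simp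
  ultimately show ?thesis using xX rx by blast
next
  case False
  obtain s t where st: "s \<ge> 0" "t \<ge> 0" "x = s *\<^sub>R dl + t *\<^sub>R a"
    using xs unfolding pos_span_pair by blast
  have s: "s > 0"
  proof (rule ccontr)
    assume "\<not> s > 0" then have "s = 0" using st by simp
    then have "x \<in> pos_span {a}" using st unfolding pos_span_sing by auto
    with xa show False by blast
  qed
  have t: "t > 0"
  proof (rule ccontr)
    assume "\<not> t > 0" then have "t = 0" using st by simp
    then have "dl = (1 / s) *\<^sub>R x" using st s by simp
    then have "dl \<in> pos_span {x}" using s unfolding pos_span_sing by (intro exI[of _ "1/s"]) simp
    with False show False by blast
  qed
  have an: "a \<noteq> 0"
  proof
    assume "a = 0"
    then have "dl = (1 / s) *\<^sub>R x" using st s by simp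
    then have "dl \<in> pos_span {x}" using s unfolding pos_span_sing by (intro exI[of _ "1/s"]) simp
    with False show False by blast
  qed
  have ns: "dl \<notin> span {a}"
  proof
    assume "dl \<in> span {a}"
    then obtain c where c: "dl = c *\<^sub>R a" unfolding span_singleton by auto
    have xc: "x = (s * c + t) *\<^sub>R a" using st c by (simp add: algebra_simps)
    show False
    proof (cases "s * c + t \<ge> 0")
      case True
      then have "x \<in> pos_span {a}" using xc unfolding pos_span_sing by blast
      with xa show False by blast
    next
      case False
      then have neg: "s * c + t < 0" by simp
      have "c < 0"
      proof (rule ccontr)
        assume "\<not> c < 0"
        then have "s * c \<ge> 0" using s by simp
        then show False using neg t by linarith
      qed
      then have cneg: "c < 0" .
      have "a = (1 / (s * c + t)) *\<^sub>R x" using xc neg by simp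
      then have "dl = (c / (s * c + t)) *\<^sub>R x" using c by simp
      moreover have "c / (s * c + t) \<ge> 0" using cneg neg by (simp add: divide_nonpos_neg)
      ultimately have "dl \<in> pos_span {x}" unfolding pos_span_sing by blast
      with \<open>dl \<notin> pos_span {x}\<close> show False by blast
    qed
  qed
  have dna: "dl \<noteq> a" using ns span_base[of a "{a}"] by auto
  have ind: "independent {dl, a}"
    using ns an dna by (simp add: independent_insert)
  define Y where "Y = X \<inter> span {dl, a}"
  have dY: "dl \<in> Y" and aY: "a \<in> Y" unfolding Y_def using dX aX by (auto intro: span_base)
  have xY: "x \<in> Y" unfolding Y_def using xX xs pos_span_span by blast
  have spY: "span Y = span {dl, a}"
  proof
    show "span Y \<subseteq> span {dl, a}"
      by (rule span_minimal) (auto simp: Y_def)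
    show "span {dl, a} \<subseteq> span Y" using dY aY by (intro span_mono) auto
  qed
  have "dim Y = 2"
  proof -
    have "dim Y = dim (span Y)" by simp
    also have "\<dots> = dim {dl, a}" using spY by simp
    also have "\<dots> = card {dl, a}" using ind by (rule dim_eq_card_independent)
    also have "\<dots> = 2" using dna by simp
    finally show ?thesis .
  qed
  then have td: "two_dim_linear_subset X Y"
    unfolding two_dim_linear_subset_def Y_def by (auto intro!: exI[of _ "span {dl, a}"])
  obtain h1 h2 where fv: "fundamental_vectors Y h1 h2" using fund[OF td] by blast
  have xa2: "x \<noteq> a" using xa pos_span_base[of a "{a}"] by auto
  have "pos_span {dl, a} \<subseteq> pos_span (Y - {x})"
    using dY aY xd xa2 by (intro pos_span_mono) auto
  then have xps: "x \<in> pos_span (Y - {x})" using xs by blast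
  have "x \<noteq> h1" "x \<noteq> h2" using fv xps unfolding fundamental_vectors_def by auto
  then have "x \<in> Y - {h1, h2}" using xY by blast
  from ord1[OF td fv this] have rh: "r h1 < r x" "r h2 < r x" by auto
  have hY: "h1 \<in> Y" "h2 \<in> Y" and Ysub: "Y \<subseteq> pos_span {h1, h2}"
    using fv unfolding fundamental_vectors_def by auto
  have hX: "h1 \<in> X" "h2 \<in> X" using hY unfolding Y_def by auto
  have "dl \<in> pos_span {h1, h2}" using Ysub dY by (rule subsetD)
  then obtain d1 d2 where d: "d1 \<ge> 0" "d2 \<ge> 0" "dl = d1 *\<^sub>R h1 + d2 *\<^sub>R h2"
    unfolding pos_span_pair by blast
  have "a \<in> pos_span {h1, h2}" using Ysub aY by (rule subsetD)
  then obtain a1 a2 where aa: "a1 \<ge> 0" "a2 \<ge> 0" "a = a1 *\<^sub>R h1 + a2 *\<^sub>R h2"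
    unfolding pos_span_pair by blast
  show ?thesis
  proof (cases "d1 * a2 \<ge> d2 * a1")
    case True
    from wl_alg[OF d(1,2) aa(1,2) s t d(3) aa(3) st(3) True ns an]
    show ?thesis using hX rh rx by (intro bexI[of _ h1]) auto
  next
    case False
    have d': "dl = d2 *\<^sub>R h2 + d1 *\<^sub>R h1" unfolding d(3) by (rule add.commute)
    have a': "a = a2 *\<^sub>R h2 + a1 *\<^sub>R h1" unfolding aa(3) by (rule add.commute)
    have ineq: "d2 * a1 \<ge> d1 * a2" using False by simp
    from wl_alg[OF d(2,1) aa(2,1) s t d' a' st(3) ineq ns an]
    show ?thesis using hX rh rx by (intro bexI[of _ h2]) auto
  qed
qed

end


context bctx begin

abbreviation Xs where "Xs i \<equiv> initial_segment X r i"
abbreviation UU where "UU \<equiv> \<Union>XX"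
definition Kf where "Kf i = bclosure (Xs i) (UU \<inter> Xs i)"

lemma Xs_mem: "y \<in> Xs i \<longleftrightarrow> y \<in> X \<and> r y < i"
  unfolding initial_segment_def by simp

lemma Xs_sub: "Xs i \<subseteq> X" unfolding initial_segment_def by auto

lemma U_sub: "UU \<subseteq> X"
proof
  fix y assume "y \<in> UU"
  then obtain B where "B \<in> XX" "y \<in> B" by blast
  then show "y \<in> X" using bic closed_sub unfolding biclosed_in_set_def by blast
qed

lemma Kf_closed: "closed_in_set (Xs i) (Kf i)"
  unfolding Kf_def by (rule bclosure_closed) blast

lemma Kf_sub: "Kf i \<subseteq> Xs i" using closed_sub[OF Kf_closed] .

lemma U_Kf: "UU \<inter> Xs i \<subseteq> Kf i" unfolding Kf_def by (rule bclosure_sub)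

lemma Kf_min: "closed_in_set (Xs i) C \<Longrightarrow> UU \<inter> Xs i \<subseteq> C \<Longrightarrow> Kf i \<subseteq> C"
  unfolding Kf_def by (rule bclosure_min)

lemma inU: "y \<in> UU \<Longrightarrow> \<exists>B\<in>XX. y \<in> B \<and> biclosed_in_set X B" using bic by blast

lemma zeroK:
  assumes z: "0 \<in> X" and k: "k \<in> Kf i" and y: "y \<in> X" shows "y \<in> UU"
proof -
  have "UU \<inter> Xs i \<noteq> {}"
  proof
    assume e: "UU \<inter> Xs i = {}"
    have "closed_in_set (Xs i) {}" by (rule closed_in_setI) auto
    then have "Kf i \<subseteq> {}" using Kf_min e by blast
    with k show False by blast
  qed
  then obtain u where "u \<in> UU" by blast
  then obtain B where B: "B \<in> XX" "u \<in> B" "biclosed_in_set X B" using inU by blast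
  have "B = X" by (rule zero_biclosed[OF z B(3) B(2)])
  then show ?thesis using B(1) y by blast
qed

lemma full_mem:
  assumes "full_subset X F" "\<alpha> \<in> F" "\<beta> \<in> F" "y \<in> X" "y \<in> span {\<alpha>, \<beta>}" shows "y \<in> F"
proof -
  have "F \<inter> span {\<alpha>, \<beta>} = X \<inter> span {\<alpha>, \<beta>}" using assms(1-3) unfolding full_subset_def by blast
  then show ?thesis using assms(4,5) by blast
qed

lemma clean_sep:
  assumes K: "biclosed_in_set (Xs i) K" and abc: "\<alpha> \<in> Xs i" "\<beta> \<in> Xs i" "\<gamma> \<in> Xs i"
  shows "\<exists>F. full_subset X F \<and> \<alpha> \<in> F \<and> \<beta> \<in> F \<and> \<gamma> \<in> F \<and>
    (\<forall>P N y. P \<subseteq> K \<inter> F \<longrightarrow> N \<subseteq> (Xs i - K) \<inter> F \<longrightarrow> y \<in> pos_span P \<longrightarrow> y \<in> pos_span N \<longrightarrow> y = 0)"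
proof -
  have "\<forall>i. \<forall>\<alpha>\<in>Xs i. \<forall>\<beta>\<in>Xs i. \<forall>\<gamma>\<in>Xs i.
         \<exists>F. full_subset X F \<and> \<alpha> \<in> F \<and> \<beta> \<in> F \<and> \<gamma> \<in> F \<and> clean (F \<inter> Xs i)"
    using suit unfolding suitable_ordering_def by blast
  then obtain F where F: "full_subset X F" "\<alpha> \<in> F" "\<beta> \<in> F" "\<gamma> \<in> F" "clean (F \<inter> Xs i)"
    using abc by blast
  define Z where "Z = F \<inter> Xs i"
  have "biclosed_in_set Z (K \<inter> Z)" using biclosed_restrict[OF K] unfolding Z_def by blast
  then have ws: "pos_span (K \<inter> Z) \<inter> pos_span (Z - K \<inter> Z) = {0}"
    using F(5) unfolding clean_def weakly_separable_def Z_def by blast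
  have Ksub: "K \<subseteq> Xs i" using K unfolding biclosed_in_set_def by (auto dest: closed_sub)
  have "\<forall>P N y. P \<subseteq> K \<inter> F \<longrightarrow> N \<subseteq> (Xs i - K) \<inter> F \<longrightarrow> y \<in> pos_span P \<longrightarrow> y \<in> pos_span N \<longrightarrow> y = 0"
  proof (intro allI impI)
    fix P N y assume P: "P \<subseteq> K \<inter> F" and N: "N \<subseteq> (Xs i - K) \<inter> F"
      and yP: "y \<in> pos_span P" and yN: "y \<in> pos_span N"
    have "P \<subseteq> K \<inter> Z" using P Ksub unfolding Z_def by blast
    then have 1: "y \<in> pos_span (K \<inter> Z)" using yP pos_span_mono by blast
    have "N \<subseteq> Z - K \<inter> Z" using N unfolding Z_def by blast
    then have 2: "y \<in> pos_span (Z - K \<inter> Z)" using yN pos_span_mono by blast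
    show "y = 0" using 1 2 ws by blast
  qed
  then show ?thesis using F(1-4) by blast
qed

lemma inj_r: "inj_on r X" using suit unfolding suitable_ordering_def by blast

lemma Xs_Suc:
  assumes "dl \<in> X" "r dl = i" shows "Xs (Suc i) = insert dl (Xs i)"
proof
  show "Xs (Suc i) \<subseteq> insert dl (Xs i)"
  proof
    fix y assume y: "y \<in> Xs (Suc i)"
    show "y \<in> insert dl (Xs i)"
    proof (cases "r y = i")
      case True
      then have "y = dl" using inj_r assms y unfolding Xs_mem inj_on_def by auto
      then show ?thesis by simp
    next
      case False then show ?thesis using y by (auto simp: Xs_mem)
    qed
  qed
  show "insert dl (Xs i) \<subseteq> Xs (Suc i)" using assms by (auto simp: Xs_mem)
qed

lemma Xs_Suc_none:
  assumes "\<not> (\<exists>dl\<in>X. r dl = i)" shows "Xs (Suc i) = Xs i"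
  using assms unfolding initial_segment_def by (auto simp: less_Suc_eq)

end


context bctx begin

context
  fixes i dl
  assumes dX: "dl \<in> X" and rd: "r dl = i" and Kb: "biclosed_in_set (Xs i) (Kf i)"
begin

lemma dnS: "dl \<notin> Xs i" using rd by (simp add: Xs_mem)

lemma Kcl: "closed_in_set (Xs i) (Kf i)" by (rule Kf_closed)

lemma Kco: "closed_in_set (Xs i) (Xs i - Kf i)"
  using Kb unfolding biclosed_in_set_def coclosed_in_set_def by blast

lemma KS: "y \<in> Kf i \<Longrightarrow> y \<in> Xs i" using Kf_sub by blast

lemma SX: "y \<in> Xs i \<Longrightarrow> y \<in> X" using Xs_sub by blast

lemma Srank: "y \<in> Xs i \<Longrightarrow> r y < r dl" using rd by (simp add: Xs_mem)

lemma rankS: "y \<in> X \<Longrightarrow> r y < r dl \<Longrightarrow> y \<in> Xs i" using rd by (simp add: Xs_mem)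

lemma Bfacts:
  assumes "dl \<in> UU"
  obtains B where "dl \<in> B" "closed_in_set X B" "closed_in_set X (X - B)" "\<And>y. y \<in> B \<Longrightarrow> y \<in> Xs i \<Longrightarrow> y \<in> Kf i"
proof -
  obtain B where B: "B \<in> XX" "dl \<in> B" "biclosed_in_set X B" using inU[OF assms] by blast
  have "\<And>y. y \<in> B \<Longrightarrow> y \<in> Xs i \<Longrightarrow> y \<in> Kf i" using U_Kf B(1) by blast
  then show ?thesis using that B unfolding biclosed_in_set_def coclosed_in_set_def by blast
qed

abbreviation gen where "gen \<equiv> dl \<in> UU \<or> (\<exists>p\<in>Kf i. \<exists>q\<in>Kf i. dl \<in> pos_span {p, q})"

lemma gen_claim:
  assumes g: gen and a: "a \<in> insert dl (Kf i)" and x: "x \<in> Xs i" and xs: "x \<in> pos_span {dl, a}"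
  shows "x \<in> Kf i"
proof (rule ccontr)
  assume xn: "x \<notin> Kf i"
  have xX: "x \<in> X" using SX[OF x] .
  show False
  proof (cases "dl \<in> UU")
    case True
    obtain B where B: "dl \<in> B" "closed_in_set X B" "closed_in_set X (X - B)"
      "\<And>y. y \<in> B \<Longrightarrow> y \<in> Xs i \<Longrightarrow> y \<in> Kf i" using Bfacts[OF True] by blast
    show False
    proof (cases "a = dl")
      case True
      then have "x \<in> B" using closed_in_setD[OF B(2) B(1) B(1) xX] xs by simp
      then show False using B(4) x xn by blast
    next
      case False
      then have aK: "a \<in> Kf i" using a by blast
      have aX: "a \<in> X" using SX[OF KS[OF aK]] .
      show False
      proof (cases "x \<in> pos_span {a}")
        case True
        then have "x \<in> Kf i" using closed_in_setD[OF Kcl aK aK x] by simp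
        then show False using xn by blast
      next
        case False
        have xd: "x \<noteq> dl" using x dnS by blast
        obtain w where w: "w \<in> X" "r w < r dl" "dl \<in> pos_span {w, x}" "x \<in> pos_span {w, a}"
          using wlemma[OF dX aX xX Srank[OF x] xs False xd] by blast
        have wS: "w \<in> Xs i" using rankS[OF w(1,2)] .
        show False
        proof (cases "w \<in> B")
          case True
          then have "w \<in> Kf i" using B(4) wS by blast
          then have "x \<in> Kf i" using closed_in_setD[OF Kcl _ aK x w(4)] by blast
          then show False using xn by blast
        next
          case False
          have "x \<notin> B" using B(4) x xn by blast
          then have "dl \<in> X - B"
            using closed_in_setD[OF B(3) _ _ dX w(3)] False w(1) xX by blast
          then show False using B(1) by blast
        qed
      qed
    qed
  next
    case False
    then obtain p q where pq: "p \<in> Kf i" "q \<in> Kf i" "dl \<in> pos_span {p, q}" using g by blast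
    show False
    proof (cases "a = dl")
      case True
      have "{dl} \<subseteq> pos_span {p, q}" using pq(3) by blast
      then have "pos_span {dl} \<subseteq> pos_span {p, q}" by (rule pos_span_trans)
      moreover have "x \<in> pos_span {dl}" using xs True by simp
      ultimately have "x \<in> pos_span {p, q}" by blast
      then have "x \<in> Kf i" using closed_in_setD[OF Kcl pq(1,2) x] by blast
      then show False using xn by blast
    next
      case False
      then have aK: "a \<in> Kf i" using a by blast
      obtain F where F: "full_subset X F" "p \<in> F" "q \<in> F" "a \<in> F"
        and sep: "\<forall>P N y. P \<subseteq> Kf i \<inter> F \<longrightarrow> N \<subseteq> (Xs i - Kf i) \<inter> F \<longrightarrow> y \<in> pos_span P \<longrightarrow> y \<in> pos_span N \<longrightarrow> y = 0"
        using clean_sep[OF Kb KS[OF pq(1)] KS[OF pq(2)] KS[OF aK]] by blast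
      have dF: "dl \<in> F" using full_mem[OF F(1,2,3) dX] pq(3) pos_span_span by blast
      have xF: "x \<in> F" using full_mem[OF F(1) dF F(4) xX] xs pos_span_span by blast
      have "dl \<in> pos_span {p, q, a}" using pq(3) pos_span_mono[of "{p,q}" "{p,q,a}"] by blast
      moreover have "a \<in> pos_span {p, q, a}" by (rule pos_span_base) simp
      ultimately have "{dl, a} \<subseteq> pos_span {p, q, a}" by blast
      then have "pos_span {dl, a} \<subseteq> pos_span {p, q, a}" by (rule pos_span_trans)
      then have x1: "x \<in> pos_span {p, q, a}" using xs by blast
      have x2: "x \<in> pos_span {x}" by (rule pos_span_base) simp
      have "x = 0"
        by (rule sep[rule_format, OF _ _ x1 x2]) (use pq aK F xF x xn in auto)
      then have "x \<in> pos_span {a, a}" using pos_span_0 by simp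
      then have "x \<in> Kf i" using closed_in_setD[OF Kcl aK aK x] by blast
      then show False using xn by blast
    qed
  qed
qed

lemma gen_closed:
  assumes g: gen shows "closed_in_set (insert dl (Xs i)) (insert dl (Kf i))"
proof (rule closed_in_setI)
  show "insert dl (Kf i) \<subseteq> insert dl (Xs i)" using Kf_sub by blast
next
  fix \<alpha> \<beta> \<gamma> assume ab: "\<alpha> \<in> insert dl (Kf i)" "\<beta> \<in> insert dl (Kf i)"
    and c: "\<gamma> \<in> insert dl (Xs i)" and cs: "\<gamma> \<in> pos_span {\<alpha>, \<beta>}"
  show "\<gamma> \<in> insert dl (Kf i)"
  proof (cases "\<gamma> = dl")
    case True then show ?thesis by simp
  next
    case False
    then have cS: "\<gamma> \<in> Xs i" using c by blast
    show ?thesis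
    proof (cases "\<alpha> = dl")
      case True
      then show ?thesis using gen_claim[OF g ab(2) cS] cs by simp
    next
      case aF: False
      show ?thesis
      proof (cases "\<beta> = dl")
        case True
        have "\<gamma> \<in> pos_span {dl, \<alpha>}" using cs True by (simp add: insert_commute)
        then show ?thesis using gen_claim[OF g ab(1) cS] by simp
      next
        case False
        then have "\<alpha> \<in> Kf i" "\<beta> \<in> Kf i" using ab aF by auto
        then show ?thesis using closed_in_setD[OF Kcl _ _ cS cs] by blast
      qed
    qed
  qed
qed

lemma gen_coclosed:
  assumes g: gen shows "closed_in_set (insert dl (Xs i)) (Xs i - Kf i)"
proof (rule closed_in_setI)
  show "Xs i - Kf i \<subseteq> insert dl (Xs i)" by blast
next
  fix u v \<gamma> assume uv: "u \<in> Xs i - Kf i" "v \<in> Xs i - Kf i"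
    and c: "\<gamma> \<in> insert dl (Xs i)" and cs: "\<gamma> \<in> pos_span {u, v}"
  show "\<gamma> \<in> Xs i - Kf i"
  proof (cases "\<gamma> \<in> Xs i")
    case True
    then show ?thesis using closed_in_setD[OF Kco uv True cs] by blast
  next
    case False
    then have gd: "\<gamma> = dl" using c by blast
    have uX: "u \<in> X" "v \<in> X" using uv SX by auto
    have False
    proof (cases "dl \<in> UU")
      case True
      obtain B where B: "dl \<in> B" "closed_in_set X B" "closed_in_set X (X - B)"
        "\<And>y. y \<in> B \<Longrightarrow> y \<in> Xs i \<Longrightarrow> y \<in> Kf i" using Bfacts[OF True] by blast
      have "u \<in> X - B" "v \<in> X - B" using uv uX B(4) by auto
      then have "dl \<in> X - B" using closed_in_setD[OF B(3) _ _ dX] cs gd by blast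
      then show False using B(1) by blast
    next
      case False
      then obtain p q where pq: "p \<in> Kf i" "q \<in> Kf i" "dl \<in> pos_span {p, q}" using g by blast
      have dn0: "dl \<noteq> 0"
      proof
        assume "dl = 0"
        then have "dl \<in> UU" using zeroK[of p i dl] dX pq(1) by simp
        with False show False by blast
      qed
      have uS: "u \<in> Xs i" using uv by blast
      obtain F where F: "full_subset X F" "p \<in> F" "q \<in> F" "u \<in> F"
        and sep: "\<forall>P N y. P \<subseteq> Kf i \<inter> F \<longrightarrow> N \<subseteq> (Xs i - Kf i) \<inter> F \<longrightarrow> y \<in> pos_span P \<longrightarrow> y \<in> pos_span N \<longrightarrow> y = 0"
        using clean_sep[OF Kb KS[OF pq(1)] KS[OF pq(2)] uS] by blast
      have dF: "dl \<in> F" using full_mem[OF F(1,2,3) dX] pq(3) pos_span_span by blast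
      obtain c1 c2 where cc: "c1 \<ge> 0" "c2 \<ge> 0" "dl = c1 *\<^sub>R u + c2 *\<^sub>R v"
        using cs gd unfolding pos_span_pair by blast
      have "\<exists>N. N \<subseteq> (Xs i - Kf i) \<inter> F \<and> dl \<in> pos_span N"
      proof (cases "c2 = 0")
        case True
        then have "dl = c1 *\<^sub>R u" using cc by simp
        then have "dl \<in> pos_span {u}" unfolding pos_span_sing using cc(1) by blast
        then show ?thesis using uv F(4) by (intro exI[of _ "{u}"]) auto
      next
        case False
        have "v = (1 / c2) *\<^sub>R dl - (c1 / c2) *\<^sub>R u" using cc False
          by (simp add: algebra_simps)
        then have "v \<in> span {dl, u}"
          by (simp add: span_diff span_scale span_base)
        then have "v \<in> F" using full_mem[OF F(1) dF F(4) uX(2)] by blast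
        then show ?thesis using uv F(4) cs gd by (intro exI[of _ "{u, v}"]) auto
      qed
      then obtain N where N: "N \<subseteq> (Xs i - Kf i) \<inter> F" "dl \<in> pos_span N" by blast
      have "dl = 0" by (rule sep[rule_format, OF _ N(1) pq(3) N(2)]) (use pq F in auto)
      with dn0 show False by blast
    qed
    then show ?thesis by blast
  qed
qed

lemma nongen_closed:
  assumes g: "\<not> gen" shows "closed_in_set (insert dl (Xs i)) (Kf i)"
proof (rule closed_in_setI)
  show "Kf i \<subseteq> insert dl (Xs i)" using Kf_sub by blast
next
  fix \<alpha> \<beta> \<gamma> assume ab: "\<alpha> \<in> Kf i" "\<beta> \<in> Kf i"
    and c: "\<gamma> \<in> insert dl (Xs i)" and cs: "\<gamma> \<in> pos_span {\<alpha>, \<beta>}"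
  have "\<gamma> \<noteq> dl" using g ab cs by blast
  then have "\<gamma> \<in> Xs i" using c by blast
  then show "\<gamma> \<in> Kf i" using closed_in_setD[OF Kcl ab _ cs] by blast
qed

lemma nongen_claim:
  assumes g: "\<not> gen" and u: "u \<in> insert dl (Xs i) - Kf i" and xs: "x \<in> pos_span {dl, u}"
    and xK: "x \<in> Kf i"
  shows False
proof -
  have xS: "x \<in> Xs i" using KS[OF xK] .
  have xX: "x \<in> X" using SX[OF xS] .
  have x0: "x \<noteq> 0"
  proof
    assume "x = 0"
    then have "dl \<in> UU" using zeroK[of x i dl] xX xK dX by simp
    with g show False by blast
  qed
  show False
  proof (cases "u = dl")
    case True
    then have "x \<in> pos_span {dl}" using xs by simp
    then obtain c where c: "c \<ge> 0" "x = c *\<^sub>R dl" unfolding pos_span_sing by blast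
    have "c \<noteq> 0" using c x0 by auto
    then have "dl = (1 / c) *\<^sub>R x" using c by simp
    then have "dl \<in> pos_span {x}" unfolding pos_span_sing using c(1) by (intro exI[of _ "1 / c"]) auto
    then have "dl \<in> pos_span {x, x}" by simp
    then show False using g xK by blast
  next
    case False
    then have uS: "u \<in> Xs i - Kf i" using u by blast
    have uX: "u \<in> X" using uS SX by blast
    show False
    proof (cases "x \<in> pos_span {u}")
      case True
      then obtain t where t: "t \<ge> 0" "x = t *\<^sub>R u" unfolding pos_span_sing by auto
      have "t \<noteq> 0" using t x0 by auto
      then have "u = (1 / t) *\<^sub>R x" using t by simp
      then have "u \<in> pos_span {x}" unfolding pos_span_sing using t(1) by (intro exI[of _ "1 / t"]) auto
      then have "u \<in> pos_span {x, x}" by simp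
      then have "u \<in> Kf i" using closed_in_setD[OF Kcl xK xK] uS by blast
      then show False using uS by blast
    next
      case False
      have xd: "x \<noteq> dl" using xS dnS by blast
      obtain w where w: "w \<in> X" "r w < r dl" "dl \<in> pos_span {w, x}" "x \<in> pos_span {w, u}"
        using wlemma[OF dX uX xX Srank[OF xS] xs False xd] by blast
      have wS: "w \<in> Xs i" using rankS[OF w(1,2)] .
      show False
      proof (cases "w \<in> Kf i")
        case True
        then show False using g xK w(3) by blast
      next
        case False
        then have "x \<in> Xs i - Kf i" using closed_in_setD[OF Kco _ uS xS w(4)] wS by blast
        then show False using xK by blast
      qed
    qed
  qed
qed

lemma nongen_coclosed:
  assumes g: "\<not> gen" shows "closed_in_set (insert dl (Xs i)) (insert dl (Xs i) - Kf i)"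
proof (rule closed_in_setI)
  show "insert dl (Xs i) - Kf i \<subseteq> insert dl (Xs i)" by blast
next
  fix \<alpha> \<beta> \<gamma> assume ab: "\<alpha> \<in> insert dl (Xs i) - Kf i" "\<beta> \<in> insert dl (Xs i) - Kf i"
    and c: "\<gamma> \<in> insert dl (Xs i)" and cs: "\<gamma> \<in> pos_span {\<alpha>, \<beta>}"
  show "\<gamma> \<in> insert dl (Xs i) - Kf i"
  proof (rule ccontr)
    assume "\<gamma> \<notin> insert dl (Xs i) - Kf i"
    then have gK: "\<gamma> \<in> Kf i" using c by blast
    show False
    proof (cases "\<alpha> = dl")
      case True
      then show False using nongen_claim[OF g ab(2) _ gK] cs by simp
    next
      case aF: False
      show False
      proof (cases "\<beta> = dl")
        case True
        have "\<gamma> \<in> pos_span {dl, \<alpha>}" using cs True by (simp add: insert_commute)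
        then show False using nongen_claim[OF g ab(1) _ gK] by simp
      next
        case False
        then have "\<alpha> \<in> Xs i - Kf i" "\<beta> \<in> Xs i - Kf i" using ab aF by auto
        then have "\<gamma> \<in> Xs i - Kf i" using closed_in_setD[OF Kco _ _ KS[OF gK] cs] by blast
        then show False using gK by blast
      qed
    qed
  qed
qed

lemma step_res: "biclosed_in_set (Xs (Suc i)) (Kf (Suc i)) \<and> Kf (Suc i) \<inter> Xs i = Kf i"
proof -
  have XS: "Xs (Suc i) = insert dl (Xs i)" using Xs_Suc[OF dX rd] .
  have minK: "Kf i \<subseteq> C" if C: "closed_in_set (insert dl (Xs i)) C" "UU \<inter> insert dl (Xs i) \<subseteq> C" for C
  proof -
    have "closed_in_set (Xs i) (C \<inter> Xs i)" using closed_restrict[OF C(1)] by blast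
    moreover have "UU \<inter> Xs i \<subseteq> C \<inter> Xs i" using C(2) by blast
    ultimately show ?thesis using Kf_min by blast
  qed
  show ?thesis
  proof (cases gen)
    case True
    have eq: "Kf (Suc i) = insert dl (Kf i)" unfolding Kf_def XS
    proof (rule bclosure_eq)
      show "closed_in_set (insert dl (Xs i)) (insert dl (bclosure (Xs i) (UU \<inter> Xs i)))"
        using gen_closed[OF True] unfolding Kf_def .
      show "UU \<inter> insert dl (Xs i) \<subseteq> insert dl (bclosure (Xs i) (UU \<inter> Xs i))"
        using U_Kf unfolding Kf_def by blast
    next
      fix C assume C: "closed_in_set (insert dl (Xs i)) C" "UU \<inter> insert dl (Xs i) \<subseteq> C"
      have KC: "Kf i \<subseteq> C" using minK[OF C] .
      have "dl \<in> C"
      proof (cases "dl \<in> UU")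
        case True then show ?thesis using C(2) by blast
      next
        case False
        then obtain p q where pq: "p \<in> Kf i" "q \<in> Kf i" "dl \<in> pos_span {p, q}" using \<open>gen\<close> by blast
        show ?thesis using closed_in_setD[OF C(1) _ _ _ pq(3)] pq(1,2) KC by blast
      qed
      then show "insert dl (bclosure (Xs i) (UU \<inter> Xs i)) \<subseteq> C" using KC unfolding Kf_def by blast
    qed
    have "insert dl (Xs i) - insert dl (Kf i) = Xs i - Kf i" using dnS by blast
    then have "biclosed_in_set (insert dl (Xs i)) (insert dl (Kf i))"
      using gen_closed[OF True] gen_coclosed[OF True] closed_sub[OF gen_closed[OF True]]
      unfolding biclosed_in_set_def coclosed_in_set_def by simp
    moreover have "insert dl (Kf i) \<inter> Xs i = Kf i" using dnS Kf_sub by blast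
    ultimately show ?thesis using eq XS by simp
  next
    case False
    have eq: "Kf (Suc i) = Kf i" unfolding Kf_def XS
    proof (rule bclosure_eq)
      show "closed_in_set (insert dl (Xs i)) (bclosure (Xs i) (UU \<inter> Xs i))"
        using nongen_closed[OF False] unfolding Kf_def .
      show "UU \<inter> insert dl (Xs i) \<subseteq> bclosure (Xs i) (UU \<inter> Xs i)"
        using U_Kf False unfolding Kf_def by blast
    next
      fix C assume C: "closed_in_set (insert dl (Xs i)) C" "UU \<inter> insert dl (Xs i) \<subseteq> C"
      show "bclosure (Xs i) (UU \<inter> Xs i) \<subseteq> C" using minK[OF C] unfolding Kf_def .
    qed
    have "biclosed_in_set (insert dl (Xs i)) (Kf i)"
      using nongen_closed[OF False] nongen_coclosed[OF False] closed_sub[OF nongen_closed[OF False]]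
      unfolding biclosed_in_set_def coclosed_in_set_def by simp
    then show ?thesis using eq XS Kf_sub by auto
  qed
qed

end

end


context bctx begin

lemma Kf0: "Kf 0 = {}"
  using Kf_sub[of 0] unfolding initial_segment_def by auto

lemma Kbic_all: "biclosed_in_set (Xs i) (Kf i)"
proof (induction i)
  case 0
  have "closed_in_set (Xs 0) {}" by (rule closed_in_setI) auto
  moreover have "Xs 0 = {}" unfolding initial_segment_def by auto
  ultimately show ?case using Kf0 unfolding biclosed_in_set_def coclosed_in_set_def by simp
next
  case (Suc i)
  show ?case
  proof (cases "\<exists>dl\<in>X. r dl = i")
    case True
    then obtain dl where "dl \<in> X" "r dl = i" by blast
    from step_res[OF this Suc.IH] show ?thesis by blast
  next
    case False
    have "Xs (Suc i) = Xs i" using Xs_Suc_none[OF False] .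
    then have "Kf (Suc i) = Kf i" unfolding Kf_def by simp
    then show ?thesis using Suc.IH \<open>Xs (Suc i) = Xs i\<close> by simp
  qed
qed

lemma Ksuc: "Kf (Suc i) \<inter> Xs i = Kf i"
proof (cases "\<exists>dl\<in>X. r dl = i")
  case True
  then obtain dl where "dl \<in> X" "r dl = i" by blast
  from step_res[OF this Kbic_all] show ?thesis by blast
next
  case False
  have "Xs (Suc i) = Xs i" using Xs_Suc_none[OF False] .
  then have "Kf (Suc i) = Kf i" unfolding Kf_def by simp
  then show ?thesis using Kf_sub by blast
qed

lemma Xs_mono: "i \<le> j \<Longrightarrow> Xs i \<subseteq> Xs j"
  unfolding initial_segment_def by auto

lemma Kmono: "i \<le> j \<Longrightarrow> Kf j \<inter> Xs i = Kf i"
proof (induction j rule: dec_induct)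
  case base then show ?case using Kf_sub by blast
next
  case (step j)
  have "Xs i \<subseteq> Xs j" using Xs_mono step(1) .
  then have "Kf (Suc j) \<inter> Xs i = (Kf (Suc j) \<inter> Xs j) \<inter> Xs i" by blast
  also have "\<dots> = Kf j \<inter> Xs i" using Ksuc by simp
  finally show ?case using step(3) by simp
qed

definition Kinf where "Kinf = (\<Union>i. Kf i)"

lemma Kinf_cap: "Kinf \<inter> Xs i = Kf i"
proof
  show "Kf i \<subseteq> Kinf \<inter> Xs i" unfolding Kinf_def using Kf_sub by blast
  show "Kinf \<inter> Xs i \<subseteq> Kf i"
  proof
    fix y assume "y \<in> Kinf \<inter> Xs i"
    then obtain j where y: "y \<in> Kf j" "y \<in> Xs i" unfolding Kinf_def by blast
    show "y \<in> Kf i"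
    proof (cases "i \<le> j")
      case True then show ?thesis using Kmono[OF True] y by blast
    next
      case False
      then have "j \<le> i" by simp
      have "y \<in> Kf i \<inter> Xs j" using Kmono[OF \<open>j \<le> i\<close>] y(1) by blast
      then show ?thesis by blast
    qed
  qed
qed

lemma Kinf_sub: "Kinf \<subseteq> X" unfolding Kinf_def using Kf_sub Xs_sub by blast

lemma inXs: "y \<in> X \<Longrightarrow> r y < n \<Longrightarrow> y \<in> Xs n" by (simp add: Xs_mem)

lemma Kinf_bic: "biclosed_in_set X Kinf"
proof -
  have cl: "closed_in_set X Kinf"
  proof (rule closed_in_setI)
    show "Kinf \<subseteq> X" by (rule Kinf_sub)
  next
    fix a b c assume ab: "a \<in> Kinf" "b \<in> Kinf" and c: "c \<in> X" and cs: "c \<in> pos_span {a, b}"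
    define n where "n = Suc (max (r a) (max (r b) (r c)))"
    have aN: "a \<in> Xs n" "b \<in> Xs n" "c \<in> Xs n"
      using ab Kinf_sub c by (auto intro!: inXs simp: n_def)
    have "a \<in> Kf n" "b \<in> Kf n" using ab aN Kinf_cap[of n] by auto
    then have "c \<in> Kf n" using closed_in_setD[OF Kf_closed _ _ aN(3) cs] by blast
    then show "c \<in> Kinf" unfolding Kinf_def by blast
  qed
  have co: "closed_in_set X (X - Kinf)"
  proof (rule closed_in_setI)
    show "X - Kinf \<subseteq> X" by blast
  next
    fix a b c assume ab: "a \<in> X - Kinf" "b \<in> X - Kinf" and c: "c \<in> X" and cs: "c \<in> pos_span {a, b}"
    define n where "n = Suc (max (r a) (max (r b) (r c)))"
    have aN: "a \<in> Xs n" "b \<in> Xs n" "c \<in> Xs n"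
      using ab c by (auto intro!: inXs simp: n_def)
    have co_n: "closed_in_set (Xs n) (Xs n - Kf n)"
      using Kbic_all[of n] unfolding biclosed_in_set_def coclosed_in_set_def by blast
    have "a \<in> Xs n - Kf n" "b \<in> Xs n - Kf n" using ab aN Kinf_cap[of n] by auto
    then have "c \<in> Xs n - Kf n" using closed_in_setD[OF co_n _ _ aN(3) cs] by blast
    then show "c \<in> X - Kinf" using c Kinf_cap[of n] by blast
  qed
  show ?thesis using cl co Kinf_sub unfolding biclosed_in_set_def coclosed_in_set_def by blast
qed

lemma bcl_Kinf: "bclosure X UU = Kinf"
proof (rule bclosure_eq)
  show "closed_in_set X Kinf" using Kinf_bic unfolding biclosed_in_set_def by blast
  show "UU \<subseteq> Kinf"
  proof
    fix u assume u: "u \<in> UU"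
    then have "u \<in> X" using U_sub by blast
    then have "u \<in> Xs (Suc (r u))" by (simp add: Xs_mem)
    then have "u \<in> Kf (Suc (r u))" using U_Kf u by blast
    then show "u \<in> Kinf" unfolding Kinf_def by blast
  qed
next
  fix C assume C: "closed_in_set X C" "UU \<subseteq> C"
  have "Kf i \<subseteq> C" for i
  proof -
    have "closed_in_set (Xs i) (C \<inter> Xs i)" using closed_restrict[OF C(1) Xs_sub] .
    moreover have "UU \<inter> Xs i \<subseteq> C \<inter> Xs i" using C(2) by blast
    ultimately show ?thesis using Kf_min by blast
  qed
  then show "Kinf \<subseteq> C" unfolding Kinf_def by blast
qed

lemma join_bic: "biclosed_in_set X (bclosure X UU)"
  using Kinf_bic bcl_Kinf by simp

end

lemma join_biclosed:
  fixes X :: "'v::euclidean_space set" and r :: "'v \<Rightarrow> nat" and XX :: "'v set set"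
  assumes "\<And>Y. two_dim_linear_subset X Y \<Longrightarrow> \<exists>\<alpha> \<beta>. fundamental_vectors Y \<alpha> \<beta>"
    and "suitable_ordering X r"
    and "\<forall>Y\<in>XX. biclosed_in_set X Y"
  shows "biclosed_in_set X (bclosure X (\<Union>XX))"
proof -
  interpret bctx X r XX using assms by unfold_locales auto
  show ?thesis by (rule join_bic)
qed

lemma compl_biclosed: "biclosed_in_set X B \<Longrightarrow> biclosed_in_set X (X - B)"
proof -
  assume b: "biclosed_in_set X B"
  then have s: "B \<subseteq> X" unfolding biclosed_in_set_def by (auto dest: closed_sub)
  then have "X - (X - B) = B" by blast
  then show ?thesis using b unfolding biclosed_in_set_def coclosed_in_set_def by auto
qed

theorem theorem4p1:
  fixes X :: "'v::euclidean_space set" and r :: "'v \<Rightarrow> nat"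
    and \<X> :: "'v set set"
  assumes "countable X"
    and "\<And>Y. two_dim_linear_subset X Y \<Longrightarrow> \<exists>\<alpha> \<beta>. fundamental_vectors Y \<alpha> \<beta>"
    and "suitable_ordering X r"
    and "\<forall>Y\<in>\<X>. biclosed_in_set X Y"
  shows "biclosed_in_set X (bclosure X (\<Union>\<X>))
     \<and> (\<forall>Y\<in>\<X>. Y \<subseteq> bclosure X (\<Union>\<X>))
     \<and> (\<forall>Z. biclosed_in_set X Z \<and> (\<forall>Y\<in>\<X>. Y \<subseteq> Z) \<longrightarrow> bclosure X (\<Union>\<X>) \<subseteq> Z)
     \<and> biclosed_in_set X (binterior X (\<Inter>\<X>))
     \<and> (\<forall>Y\<in>\<X>. binterior X (\<Inter>\<X>) \<subseteq> Y)
     \<and> (\<forall>Z. biclosed_in_set X Z \<and> (\<forall>Y\<in>\<X>. Z \<subseteq> Y) \<longrightarrow> Z \<subseteq> binterior X (\<Inter>\<X>))"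
proof -
  have j1: "biclosed_in_set X (bclosure X (\<Union>\<X>))" using join_biclosed[OF assms(2,3,4)] .
  have j2: "\<forall>Y\<in>\<X>. Y \<subseteq> bclosure X (\<Union>\<X>)" using bclosure_sub by blast
  have j3: "\<forall>Z. biclosed_in_set X Z \<and> (\<forall>Y\<in>\<X>. Y \<subseteq> Z) \<longrightarrow> bclosure X (\<Union>\<X>) \<subseteq> Z"
  proof (intro allI impI)
    fix Z assume Z: "biclosed_in_set X Z \<and> (\<forall>Y\<in>\<X>. Y \<subseteq> Z)"
    then have "closed_in_set X Z" unfolding biclosed_in_set_def by blast
    moreover have "\<Union>\<X> \<subseteq> Z" using Z by blast
    ultimately show "bclosure X (\<Union>\<X>) \<subseteq> Z" by (rule bclosure_min)
  qed
  define \<X>' where "\<X>' = (\<lambda>Y. X - Y) ` \<X>"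
  have b': "\<forall>Y\<in>\<X>'. biclosed_in_set X Y" unfolding \<X>'_def using assms(4) compl_biclosed by blast
  have eqU: "X - \<Inter>\<X> = \<Union>\<X>'" unfolding \<X>'_def by blast
  define J where "J = bclosure X (\<Union>\<X>')"
  have bi: "binterior X (\<Inter>\<X>) = X - J" unfolding binterior_def J_def eqU ..
  have m1: "biclosed_in_set X (binterior X (\<Inter>\<X>))"
    unfolding bi J_def using compl_biclosed[OF join_biclosed[OF assms(2,3) b']] .
  have m2: "\<forall>Y\<in>\<X>. binterior X (\<Inter>\<X>) \<subseteq> Y"
  proof
    fix Y assume Y: "Y \<in> \<X>"
    have "X - Y \<in> \<X>'" unfolding \<X>'_def using Y by (rule imageI)
    then have "X - Y \<subseteq> \<Union>\<X>'" by (rule Union_upper)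
    also have "\<Union>\<X>' \<subseteq> J" unfolding J_def by (rule bclosure_sub)
    finally have "X - Y \<subseteq> J" .
    then show "binterior X (\<Inter>\<X>) \<subseteq> Y" unfolding bi by blast
  qed
  have m3: "\<forall>Z. biclosed_in_set X Z \<and> (\<forall>Y\<in>\<X>. Z \<subseteq> Y) \<longrightarrow> Z \<subseteq> binterior X (\<Inter>\<X>)"
  proof (intro allI impI)
    fix Z assume Z: "biclosed_in_set X Z \<and> (\<forall>Y\<in>\<X>. Z \<subseteq> Y)"
    then have cZ: "closed_in_set X (X - Z)" and sZ: "Z \<subseteq> X"
      unfolding biclosed_in_set_def coclosed_in_set_def by (auto dest: closed_sub)
    have "\<Union>\<X>' \<subseteq> X - Z" unfolding \<X>'_def using Z by blast
    then have "J \<subseteq> X - Z" unfolding J_def by (rule bclosure_min[OF cZ])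
    then show "Z \<subseteq> binterior X (\<Inter>\<X>)" unfolding bi using sZ by blast
  qed
  show ?thesis using j1 j2 j3 m1 m2 m3 by blast
qed


end
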